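(* Let $n,k$ be integers with $2\le k\le n/2$ and let $P$ be a Gutkin $(n,k)$-gon with vertices $v_0,\dots,v_{n-1}$. Then for every $i$, the interior angles of $P$ at the vertices $v_i$ and $v_{i+k-1}$ are equal (indices modulo $n$).
   Context: Let $P$ be a convex $n$-gon in the Euclidean plane with vertices $v_0,\dots,v_{n-1}$ in their cyclic (counterclockwise) order, indices taken modulo $n$. $P$ is a Gutkin $(n,k)$-gon if there exists an angle $\alpha$ such that for every $i$, $\angle v_{i+1}v_iv_{i+k}=\angle v_{i+k-1}v_{i+k}v_i=\alpha$, where $\angle abc$ denotes the angle at $b$ between the segments $ba$ and $bc$. *)

theory Defs
  imports "HOL-Analysis.Analysis"
begin

definition pangle :: "real^2 \<Rightarrow> real^2 \<Rightarrow> real^2 \<Rightarrow> real" where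
  "pangle a b c = arccos (((a - b) \<bullet> (c - b)) / (norm (a - b) * norm (c - b)))"

definition cross2 :: "real^2 \<Rightarrow> real^2 \<Rightarrow> real" where
  "cross2 u w = u$1 * w$2 - u$2 * w$1"

definition convex_ccw_polygon :: "nat \<Rightarrow> (nat \<Rightarrow> real^2) \<Rightarrow> bool" where
  "convex_ccw_polygon n v \<longleftrightarrow> n \<ge> 3 \<and>
     (\<forall>i<n. \<forall>j<n. i \<noteq> j \<longrightarrow> v i \<noteq> v j) \<and>
     (\<forall>i<n. \<forall>j<n. j \<noteq> i \<and> j \<noteq> (i + 1) mod n \<longrightarrow>
        cross2 (v ((i + 1) mod n) - v i) (v j - v i) > 0)"

definition gutkin_polygon :: "nat \<Rightarrow> nat \<Rightarrow> (nat \<Rightarrow> real^2) \<Rightarrow> bool" where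
  "gutkin_polygon n k v \<longleftrightarrow> convex_ccw_polygon n v \<and>
     (\<exists>\<alpha>. \<forall>i<n.
        pangle (v ((i + 1) mod n)) (v i) (v ((i + k) mod n)) = \<alpha> \<and>
        pangle (v ((i + k - 1) mod n)) (v ((i + k) mod n)) (v i) = \<alpha>)"

definition interior_angle :: "nat \<Rightarrow> (nat \<Rightarrow> real^2) \<Rightarrow> nat \<Rightarrow> real" where
  "interior_angle n v i =
     pangle (v ((i + n - 1) mod n)) (v (i mod n)) (v ((i + 1) mod n))"

end

theory Submission imports Defs begin

lemma dot2: "(x::real^2) \<bullet> y = x$1*y$1 + x$2*y$2"
  by (simp add: inner_vec_def sum_2)

lemma normsq2: "(norm (x::real^2))^2 = x$1^2 + x$2^2"
  by (metis dot2 power2_norm_eq_inner power2_eq_square)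

definition rot :: "real \<Rightarrow> real^2 \<Rightarrow> real^2" where
  "rot d u = (\<chi> i. if i = 1 then d*u$1 - sqrt(1-d^2)*u$2 else sqrt(1-d^2)*u$1 + d*u$2)"

lemma rot1[simp]: "rot d u $ 1 = d*u$1 - sqrt(1-d^2)*u$2" by (simp add: rot_def)
lemma rot2[simp]: "rot d u $ 2 = sqrt(1-d^2)*u$1 + d*u$2" by (simp add: rot_def)

lemma rot_comp:
  fixes u1 u2 w1 w2 d :: real
  assumes "u1^2+u2^2 = 1" "w1^2+w2^2=1" "u1*w1+u2*w2 = d" "u1*w2-u2*w1 > 0"
  shows "w1 = d*u1 - sqrt(1-d^2)*u2 \<and> w2 = sqrt(1-d^2)*u1 + d*u2"
proof -
  define c where "c = u1*w2-u2*w1"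
  have "c^2 = 1 - d^2"
  proof -
    have "c^2 + d^2 = (u1^2+u2^2)*(w1^2+w2^2)" unfolding c_def assms(3)[symmetric] by algebra
    thus ?thesis using assms by simp
  qed
  hence c: "c = sqrt(1-d^2)" using assms(4) c_def by (metis less_eq_real_def real_sqrt_unique)
  have "d*u1 - c*u2 = w1*(u1^2+u2^2)" unfolding c_def assms(3)[symmetric] by algebra
  moreover have "c*u1 + d*u2 = w2*(u1^2+u2^2)" unfolding c_def assms(3)[symmetric] by algebra
  ultimately show ?thesis using assms(1) c by simp
qed

lemma rot_lemma:
  fixes a b :: "real^2"
  assumes "a \<noteq> 0" "b \<noteq> 0" "(a \<bullet> b)/(norm a * norm b) = d" "cross2 a b > 0"
  shows "sgn b = rot d (sgn a)"
proof -
  have na: "norm a > 0" and nb: "norm b > 0" using assms by auto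
  let ?u1 = "a$1/norm a" and ?u2 = "a$2/norm a" and ?w1 = "b$1/norm b" and ?w2 = "b$2/norm b"
  have a0: "\<not>(a$1=0 \<and> a$2=0)" and b0: "\<not>(b$1=0 \<and> b$2=0)" using assms(1,2) by (auto simp: vec_eq_iff forall_2)
  have "?u1^2+?u2^2 = ((a$1)^2+(a$2)^2)/(norm a)^2" by (simp add: power_divide add_divide_distrib)
  hence "?u1^2+?u2^2 = 1" using normsq2[of a] na a0 by simp
  moreover have "?w1^2+?w2^2 = ((b$1)^2+(b$2)^2)/(norm b)^2" by (simp add: power_divide add_divide_distrib)
  hence "?w1^2+?w2^2 = 1" using normsq2[of b] nb b0 by simp
  moreover have "?u1*?w1+?u2*?w2 = d" using assms(3) by (simp add: dot2 add_divide_distrib)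
  moreover have "?u1*?w2-?u2*?w1 > 0"
  proof -
    have "?u1*?w2-?u2*?w1 = cross2 a b / (norm a * norm b)" by (simp add: cross2_def diff_divide_distrib)
    thus ?thesis using assms(4) na nb by simp
  qed
  ultimately have "?w1 = d*?u1 - sqrt(1-d^2)*?u2 \<and> ?w2 = sqrt(1-d^2)*?u1 + d*?u2" by (rule rot_comp)
  thus ?thesis by (simp add: vec_eq_iff forall_2 sgn_div_norm divide_inverse mult.commute)
qed

lemma rot_dot:
  assumes "\<bar>d\<bar> \<le> 1"
  shows "rot d u \<bullet> rot d w = u \<bullet> w"
proof -
  have s: "(sqrt(1-d^2))^2 = 1-d^2" using assms by (simp add: abs_square_le_1)
  have "rot d u \<bullet> rot d w = (d^2 + (sqrt(1-d^2))^2) * (u \<bullet> w)"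
    by (simp add: dot2) algebra
  thus ?thesis using s by simp
qed

lemma normdot_bound: "\<bar>((a::real^2) \<bullet> b)/(norm a * norm b)\<bar> \<le> 1"
proof (cases "norm a * norm b = 0")
  case False
  hence "norm a * norm b > 0" by (simp add: zero_less_mult_iff)
  moreover have "\<bar>a \<bullet> b\<bar> \<le> norm a * norm b" by (rule Cauchy_Schwarz_ineq2)
  ultimately show ?thesis by (simp only: abs_divide) (simp add: divide_le_eq_1_pos)
qed auto

lemma mod_pred_succ: "q < (n::nat) \<Longrightarrow> ((q + n - 1) mod n + 1) mod n = q"
proof -
  assume q: "q < n"
  have "((q + n - 1) mod n + 1) mod n = (q + n - 1 + 1) mod n" by (rule mod_add_left_eq)
  also have "q + n - 1 + 1 = q + n" using q by simp
  finally show ?thesis using q by simp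
qed

lemma mod_sum_lt: "a < (n::nat) \<Longrightarrow> b < n \<Longrightarrow> (a+b) mod n = (if a+b<n then a+b else a+b-n)"
proof (cases "a+b < n")
  case False
  assume "a < n" "b < n"
  hence "(a+b) mod n = (a+b-n) mod n" using False by (simp add: le_mod_geq)
  also have "\<dots> = a+b-n" using \<open>a<n\<close> \<open>b<n\<close> by simp
  finally show ?thesis using False by simp
qed simp

theorem mainTheorem9:
  fixes n k :: nat and v :: "nat \<Rightarrow> real^2"
  assumes "2 \<le> k" and "2 * k \<le> n"
    and "gutkin_polygon n k v"
  shows "\<forall>i<n. interior_angle n v i = interior_angle n v ((i + k - 1) mod n)"
proof -
  have cv: "convex_ccw_polygon n v" and "\<exists>\<alpha>. \<forall>i<n.
        pangle (v ((i + 1) mod n)) (v i) (v ((i + k) mod n)) = \<alpha> \<and>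
        pangle (v ((i + k - 1) mod n)) (v ((i + k) mod n)) (v i) = \<alpha>"
    using assms(3) unfolding gutkin_polygon_def by auto
  then obtain \<alpha> where al: "\<And>i. i<n \<Longrightarrow>
        pangle (v ((i + 1) mod n)) (v i) (v ((i + k) mod n)) = \<alpha> \<and>
        pangle (v ((i + k - 1) mod n)) (v ((i + k) mod n)) (v i) = \<alpha>" by blast
  have n3: "n \<ge> 3" and dist: "\<And>i j. i<n \<Longrightarrow> j<n \<Longrightarrow> i \<noteq> j \<Longrightarrow> v i \<noteq> v j"
    and cr: "\<And>i j. i<n \<Longrightarrow> j<n \<Longrightarrow> j \<noteq> i \<Longrightarrow> j \<noteq> (i + 1) mod n \<Longrightarrow>
        cross2 (v ((i + 1) mod n) - v i) (v j - v i) > 0"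
    using cv unfolding convex_ccw_polygon_def by auto
  define d where "d = cos \<alpha>"
  have dabs: "\<bar>d\<bar> \<le> 1" unfolding d_def by simp
  define E where "E j = v ((j+1) mod n) - v j" for j
  define C where "C j = v ((j+k) mod n) - v j" for j
  have kn: "k < n" using assms by linarith
  have rr: "sgn (E ((j+k-1) mod n)) = rot d (rot d (sgn (E j)))" if jn: "j < n" for j
  proof -
    define m where "m = (j+k-1) mod n"
    have mn: "m < n" unfolding m_def using kn by simp
    have m1: "(m+1) mod n = (j+k) mod n"
    proof -
      have "((j+k-1) mod n + 1) mod n = (j+k-1+1) mod n" by (rule mod_add_left_eq)
      thus ?thesis unfolding m_def using assms(1) by simp
    qed
    have e1: "(j+k) mod n = (if j+k<n then j+k else j+k-n)" using mod_sum_lt[OF jn kn] .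
    have e2: "(j+1) mod n = (if j+1<n then j+1 else j+1-n)" using mod_sum_lt[OF jn, of 1] n3 by simp
    have jk: "(j+k) mod n \<noteq> j" using e1 kn assms(1) jn by auto
    have jk1: "(j+k) mod n \<noteq> (j+1) mod n" unfolding e1 e2 using kn assms(1) jn by auto
    have j1: "(j+1) mod n \<noteq> j" unfolding e2 using n3 jn by auto
    have jm: "j \<noteq> m"
    proof
      assume "j = m"
      hence "(j+1) mod n = (j+k) mod n" using m1 by simp
      thus False using jk1 by simp
    qed
    have jkn: "(j+k) mod n < n" "(j+1) mod n < n" using n3 by auto
    have Ej: "E j \<noteq> 0" unfolding E_def using dist[OF jkn(2) jn j1] by simp
    have Cj: "C j \<noteq> 0" unfolding C_def using dist[OF jkn(1) jn jk] by simp
    have "(m+1) mod n = (if m+1<n then m+1 else m+1-n)" using mod_sum_lt[OF mn, of 1] n3 by simp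
    hence mm: "(j+k) mod n \<noteq> m" unfolding m1[symmetric] using n3 mn by auto
    have Em: "E m \<noteq> 0" unfolding E_def m1 using dist[OF jkn(1) mn mm] by simp
    have a1: "pangle (v ((j + 1) mod n)) (v j) (v ((j + k) mod n)) = \<alpha>" using al[OF jn] by simp
    hence "arccos ((E j \<bullet> C j)/(norm (E j) * norm (C j))) = \<alpha>"
      unfolding pangle_def E_def C_def .
    hence d1: "(E j \<bullet> C j)/(norm (E j) * norm (C j)) = d"
      unfolding d_def using normdot_bound[of "E j" "C j"] by (auto simp: cos_arccos_abs)
    have c1: "cross2 (E j) (C j) > 0" unfolding E_def C_def
      using cr[OF jn jkn(1) jk jk1] .
    have r1: "sgn (C j) = rot d (sgn (E j))" by (rule rot_lemma[OF Ej Cj d1 c1])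
    have a2: "pangle (v m) (v ((j + k) mod n)) (v j) = \<alpha>" using al[OF jn] unfolding m_def by simp
    have e1: "v m - v ((j + k) mod n) = - E m" unfolding E_def m1 by simp
    have e2: "v j - v ((j + k) mod n) = - C j" unfolding C_def by simp
    have "arccos ((E m \<bullet> C j)/(norm (E m) * norm (C j))) = \<alpha>"
      using a2 unfolding pangle_def e1 e2 by simp
    hence d2: "(C j \<bullet> E m)/(norm (C j) * norm (E m)) = d"
      unfolding d_def using normdot_bound[of "E m" "C j"]
      by (auto simp: cos_arccos_abs inner_commute mult.commute)
    have "cross2 (E m) (v j - v m) > 0" using cr[OF mn jn jm] jk unfolding m1 E_def by simp
    moreover have "cross2 (C j) (E m) = cross2 (E m) (v j - v m)"
      unfolding C_def E_def m1 cross2_def by (simp add: algebra_simps)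
    ultimately have c2: "cross2 (C j) (E m) > 0" by simp
    have r2: "sgn (E m) = rot d (sgn (C j))" by (rule rot_lemma[OF Cj Em d2 c2])
    show ?thesis using r1 r2 unfolding m_def by simp
  qed
  have ia: "interior_angle n v q = arccos (- (sgn (E ((q+n-1) mod n)) \<bullet> sgn (E q)))"
    if qn: "q < n" for q
  proof -
    define p where "p = (q+n-1) mod n"
    have p1: "(p+1) mod n = q" unfolding p_def using mod_pred_succ[OF qn] .
    have ep: "v p - v q = - E p" unfolding E_def p1 by simp
    have eq: "v ((q+1) mod n) - v q = E q" unfolding E_def ..
    have "interior_angle n v q = pangle (v p) (v q) (v ((q+1) mod n))"
      unfolding interior_angle_def p_def using qn by simp
    also have "\<dots> = arccos ((- E p \<bullet> E q)/(norm (E p) * norm (E q)))"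
      unfolding pangle_def ep eq by simp
    also have "\<dots> = arccos (- (sgn (E p) \<bullet> sgn (E q)))"
      by (simp add: sgn_div_norm divide_inverse mult_ac)
    finally show ?thesis unfolding p_def .
  qed
  show ?thesis
  proof (intro allI impI)
    fix i assume iN: "i < n"
    define i' where "i' = (i+k-1) mod n"
    define p where "p = (i+n-1) mod n"
    have i'n: "i' < n" and pn: "p < n" unfolding i'_def p_def using n3 by auto
    have pp: "(i'+n-1) mod n = (p+k-1) mod n"
    proof -
      have "(i'+n-1) mod n = ((i+k-1) mod n + (n-1)) mod n" unfolding i'_def using n3 by simp
      also have "\<dots> = (i+k-1+(n-1)) mod n" by (simp add: mod_add_left_eq)
      also have "\<dots> = (i+n-1 + (k-1)) mod n" using n3 assms(1) by (simp add: algebra_simps)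
      also have "\<dots> = ((i+n-1) mod n + (k-1)) mod n" by (simp add: mod_add_left_eq)
      also have "\<dots> = (p+k-1) mod n" unfolding p_def using assms(1) by simp
      finally show ?thesis .
    qed
    have "sgn (E ((i'+n-1) mod n)) \<bullet> sgn (E i') = sgn (E ((p+k-1) mod n)) \<bullet> sgn (E ((i+k-1) mod n))"
      using pp i'_def by simp
    also have "\<dots> = rot d (rot d (sgn (E p))) \<bullet> rot d (rot d (sgn (E i)))"
      using rr[OF pn] rr[OF iN] by simp
    also have "\<dots> = sgn (E p) \<bullet> sgn (E i)" using rot_dot[OF dabs] by simp
    finally have "sgn (E ((i'+n-1) mod n)) \<bullet> sgn (E i') = sgn (E p) \<bullet> sgn (E i)" .
    thus "interior_angle n v i = interior_angle n v ((i + k - 1) mod n)"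
      using ia[OF iN] ia[OF i'n] unfolding i'_def p_def by simp
  qed
qed

end
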